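(* For $n\ge 3$, $M_2(WC_n)\simeq M_2(CC_n)$, where $WC_n$ is the fully whiskered $2n$-cycle graph and $CC_n$ is the clawed $n$-cycle.
   Context: The fully whiskered graph of a graph $G$ is obtained by attaching a leaf to every vertex of $G$; $WC_n$ is the fully whiskered graph of the cycle on $2n$ vertices. For a graph $G$ of maximum degree at most $3$, the clawed graph $CG$ is obtained by subdividing every edge of $G$ and then attaching new leaves to every original vertex so that every original vertex has degree exactly $3$; $CC_n$ is the clawed graph of the cycle on $n$ vertices. $M_2(G)$ is the simplicial complex whose vertices are the edges of $G$ and whose faces are the $2$-matchings of $G$ (edge sets in which every vertex has degree at most $2$). *)

theory Defs
  imports "HOL-Analysis.Analysis"
begin

text \<open>Graphs are given by a vertex set V and a set E of 2-element vertex sets (edges).\<close>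

definition deg :: "'a set set \<Rightarrow> 'a \<Rightarrow> nat" where
  "deg E v = card {e \<in> E. v \<in> e}"

definition cycle_vertices :: "nat \<Rightarrow> nat set" where
  "cycle_vertices m = {..<m}"

definition cycle_edges :: "nat \<Rightarrow> nat set set" where
  "cycle_edges m = {{i, Suc i mod m} | i. i < m}"

text \<open>Fully whiskered graph: Inl v are the original vertices, Inr v the leaf attached to v.\<close>
definition whiskered_edges :: "'a set \<Rightarrow> 'a set set \<Rightarrow> ('a + 'a) set set" where
  "whiskered_edges V E =
     {{Inl u, Inl v} | u v. {u, v} \<in> E} \<union> {{Inl v, Inr v} | v. v \<in> V}"

text \<open>Clawed graph: every edge e is subdivided by a new vertex Sub e, and every original
  vertex v receives 3 - deg v new leaves Leaf v k.\<close>
datatype 'a claw_vertex = Orig 'a | Sub "'a set" | Leaf 'a nat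

definition clawed_edges :: "'a set \<Rightarrow> 'a set set \<Rightarrow> 'a claw_vertex set set" where
  "clawed_edges V E =
     {{Orig u, Sub e} | u e. e \<in> E \<and> u \<in> e}
     \<union> {{Orig v, Leaf v k} | v k. v \<in> V \<and> k < 3 - deg E v}"

text \<open>M_2(G): faces are the 2-matchings (edge sets with every vertex of degree at most 2).\<close>
definition two_matchings :: "'a set set \<Rightarrow> 'a set set set" where
  "two_matchings E = {F. F \<subseteq> E \<and> (\<forall>v. card {e \<in> F. v \<in> e} \<le> 2)}"

text \<open>Geometric realization of a (finite) abstract simplicial complex K with vertices of type 'v:
  the functions 'v => real that are nonnegative, whose support is a face of K, and which sum to 1;
  topologized as a subspace of the product topology on 'v => real.\<close>
definition geom_real :: "'v set set \<Rightarrow> ('v \<Rightarrow> real) set" where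
  "geom_real K = {f. (\<forall>v. 0 \<le> f v) \<and> {v. f v \<noteq> 0} \<in> K \<and> (\<Sum>v\<in>{v. f v \<noteq> 0}. f v) = 1}"

end

theory Submission
  imports Defs
begin


definition supp :: "('v \<Rightarrow> real) \<Rightarrow> 'v set" where "supp f = {v. f v \<noteq> 0}"

definition cplx :: "'v set \<Rightarrow> 'v set set \<Rightarrow> bool" where
  "cplx V K \<longleftrightarrow> finite V \<and> K \<subseteq> Pow V \<and> (\<forall>\<sigma>\<in>K. \<forall>\<tau>. \<tau> \<subseteq> \<sigma> \<longrightarrow> \<tau> \<in> K)"

lemma coord_cont [continuous_intros]: "continuous_on S (\<lambda>x::'a \<Rightarrow> 'b::topological_space. x i)"
  by (rule continuous_on_subset[OF continuous_on_product_coordinates]) simp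

lemma geom_real_iff:
  assumes "finite V" "K \<subseteq> Pow V"
  shows "f \<in> geom_real K \<longleftrightarrow> (\<forall>v. 0 \<le> f v) \<and> supp f \<in> K \<and> sum f V = 1"
proof -
  have "sum f V = sum f (supp f)" if "supp f \<in> K"
  proof -
    have "supp f \<subseteq> V" using that assms by auto
    then show ?thesis using assms(1) by (intro sum.mono_neutral_right) (auto simp: supp_def)
  qed
  then show ?thesis by (auto simp: geom_real_def supp_def)
qed

lemma cplx_del: "cplx V K \<Longrightarrow> cplx V {\<sigma>\<in>K. u \<notin> \<sigma>}"
  unfolding cplx_def by auto

lemma sl_homotopic:
  assumes K: "cplx V K" and cf: "continuous_on S \<phi>" and cg: "continuous_on S \<psi>"
    and fS: "\<phi> ` S \<subseteq> geom_real K" and gS: "\<psi> ` S \<subseteq> geom_real K"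
    and sup: "\<And>x. x \<in> S \<Longrightarrow> supp (\<phi> x) \<union> supp (\<psi> x) \<in> K"
  shows "homotopic_with (\<lambda>_. True) (top_of_set S) (top_of_set (geom_real K)) \<phi> \<psi>"
  unfolding homotopic_with_def
proof (intro exI conjI allI ballI)
  let ?h = "\<lambda>p::real \<times> _. (\<lambda>v. (1 - fst p) * \<phi> (snd p) v + fst p * \<psi> (snd p) v)"
  have fin: "finite V" and KP: "K \<subseteq> Pow V" and dc: "\<And>\<sigma> \<tau>. \<sigma> \<in> K \<Longrightarrow> \<tau> \<subseteq> \<sigma> \<Longrightarrow> \<tau> \<in> K"
    using K by (auto simp: cplx_def)
  have "continuous_on ({0..1} \<times> S) ?h"
  proof (intro continuous_on_coordinatewise_then_product)
    fix v
    have c1: "continuous_on ({0..1::real} \<times> S) (\<lambda>p. \<phi> (snd p) v)"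
      by (rule continuous_on_compose2[OF continuous_on_product_then_coordinatewise[OF cf] continuous_on_snd]) auto
    have c2: "continuous_on ({0..1::real} \<times> S) (\<lambda>p. \<psi> (snd p) v)"
      by (rule continuous_on_compose2[OF continuous_on_product_then_coordinatewise[OF cg] continuous_on_snd]) auto
    show "continuous_on ({0..1} \<times> S) (\<lambda>p. ?h p v)"
      by (intro continuous_intros c1 c2)
  qed
  moreover have "?h p \<in> geom_real K" if "p \<in> {0..1} \<times> S" for p
  proof -
    obtain t x where p: "p = (t, x)" by (cases p)
    then have t: "0 \<le> t" "t \<le> 1" and x: "x \<in> S" using that by auto
    have fx: "\<phi> x \<in> geom_real K" and gx: "\<psi> x \<in> geom_real K" using fS gS x by auto
    have "supp (?h p) \<subseteq> supp (\<phi> x) \<union> supp (\<psi> x)" by (auto simp: supp_def p)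
    then have "supp (?h p) \<in> K" using dc sup x by blast
    moreover have "\<forall>v. 0 \<le> ?h p v" using fx gx t by (auto simp: geom_real_iff[OF fin KP] p)
    moreover have "sum (?h p) V = 1"
      using fx gx by (simp add: geom_real_iff[OF fin KP] p sum.distrib flip: sum_distrib_left)
    ultimately show ?thesis by (simp add: geom_real_iff[OF fin KP])
  qed
  ultimately show "continuous_map (prod_topology (top_of_set {0..1}) (top_of_set S)) (top_of_set (geom_real K)) ?h"
    by auto
qed auto



lemma cone_collapse:
  fixes V :: "'v set" and u b l c :: 'v
  assumes K: "cplx V K"
   and inV: "u \<in> V" "b \<in> V" "l \<in> V" "c \<in> V"
   and d: "u \<noteq> b" "u \<noteq> l" "b \<noteq> l" "c \<noteq> u"
   and dom: "\<And>\<sigma>. \<sigma> \<in> K \<Longrightarrow> u \<in> \<sigma> \<Longrightarrow> b \<in> \<sigma> \<Longrightarrow> insert l \<sigma> \<in> K"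
   and apex: "\<And>\<sigma>. \<sigma> \<in> K \<Longrightarrow> u \<in> \<sigma> \<Longrightarrow> b \<notin> \<sigma> \<Longrightarrow> insert c \<sigma> \<in> K"
  shows "top_of_set (geom_real K) homotopy_equivalent_space top_of_set (geom_real {\<sigma>\<in>K. u \<notin> \<sigma>})"
proof -
  have fin: "finite V" and KP: "K \<subseteq> Pow V" and dc: "\<And>\<sigma> \<tau>. \<sigma> \<in> K \<Longrightarrow> \<tau> \<subseteq> \<sigma> \<Longrightarrow> \<tau> \<in> K"
    using K by (auto simp: cplx_def)
  have KP': "{\<sigma>\<in>K. u \<notin> \<sigma>} \<subseteq> Pow V" using KP by auto
  define \<delta> :: "'v \<Rightarrow> 'v \<Rightarrow> real" where "\<delta> = (\<lambda>x v. if v = x then 1 else 0)"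
  define \<alpha> where "\<alpha> = (\<lambda>t::real. min 1 (4*t))"
  define \<beta> where "\<beta> = (\<lambda>t::real. max 0 (min 1 (4*t - 1)))"
  define \<gamma> where "\<gamma> = (\<lambda>t::real. (1 - \<beta> t) / max (1/2) (1 - t))"
  define M where "M = (\<lambda>f v. f v - \<delta> u v * f u - \<delta> b v * (\<alpha> (f u) * f b) + \<delta> l v * (\<alpha> (f u) * f b))"
  define P1 where "P1 = (\<lambda>f v. M f v + \<delta> u v * f u)"
  define P2 where "P2 = (\<lambda>f v. M f v + \<delta> u v * (f u * (1 - \<beta> (f u))) + \<delta> c v * (f u * \<beta> (f u)))"
  define R where "R = (\<lambda>f v. \<gamma> (f u) * M f v + \<delta> c v * (1 - \<gamma> (f u) * (1 - f u)))"
  let ?X = "geom_real K"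
  let ?Y = "geom_real {\<sigma>\<in>K. u \<notin> \<sigma>}"
  have XI: "f \<in> ?X \<longleftrightarrow> (\<forall>v. 0 \<le> f v) \<and> supp f \<in> K \<and> sum f V = 1" for f
    using geom_real_iff[OF fin KP] .
  have YI: "f \<in> ?Y \<longleftrightarrow> (\<forall>v. 0 \<le> f v) \<and> supp f \<in> K \<and> u \<notin> supp f \<and> sum f V = 1" for f
    using geom_real_iff[OF fin KP'] by auto
  have sd: "sum (\<lambda>v. \<delta> x v * a) V = a" if "x \<in> V" for x a
  proof -
    have e: "(\<lambda>v. \<delta> x v * a) = (\<lambda>v. if v = x then a else 0)" by (auto simp: \<delta>_def)
    show ?thesis using that fin by (subst e) simp
  qed
  have t01: "0 \<le> f u \<and> f u \<le> 1" if "f \<in> ?X" for f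
  proof -
    have "f u \<le> sum f V" using that inV fin by (intro member_le_sum) (auto simp: XI)
    then show ?thesis using that by (auto simp: XI)
  qed
  have \<alpha>01: "0 \<le> \<alpha> t" "\<alpha> t \<le> 1" if "0 \<le> t" for t using that by (auto simp: \<alpha>_def)
  have \<beta>01: "0 \<le> \<beta> t" "\<beta> t \<le> 1" for t by (auto simp: \<beta>_def)
  have \<beta>0: "\<beta> t = 0" if "t \<le> 1/4" for t using that by (auto simp: \<beta>_def)
  have \<alpha>1: "\<alpha> t = 1" if "1/4 < t" for t using that by (auto simp: \<alpha>_def)
  have \<gamma>q: "\<gamma> t * (1 - t) = 1" if "0 \<le> t" "t \<le> 1/4" for t
    using that by (auto simp: \<gamma>_def \<beta>0)
  have \<gamma>le: "0 \<le> \<gamma> t \<and> \<gamma> t * (1 - t) \<le> 1" if "0 \<le> t" "t \<le> 1" for t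
  proof (cases "t \<le> 1/2")
    case True
    then have "max (1/2) (1 - t) = 1 - t" by auto
    then show ?thesis using \<beta>01[of t] True by (auto simp: \<gamma>_def)
  next
    case False
    then have "\<beta> t = 1" by (auto simp: \<beta>_def)
    then show ?thesis by (simp add: \<gamma>_def)
  qed
  have \<gamma>0: "\<gamma> 0 = 1" by (simp add: \<gamma>_def \<beta>_def)
  have \<alpha>0: "\<alpha> 0 = 0" by (simp add: \<alpha>_def)
  have Mu: "M f u = 0" for f using d by (simp add: M_def \<delta>_def)
  have Mb: "M f b = f b * (1 - \<alpha> (f u))" for f using d by (simp add: M_def \<delta>_def algebra_simps)
  have Ml: "M f l = f l + \<alpha> (f u) * f b" for f using d by (simp add: M_def \<delta>_def)
  have Mo: "M f v = f v" if "v \<noteq> u" "v \<noteq> b" "v \<noteq> l" for f v using that by (simp add: M_def \<delta>_def)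
  have sumM: "sum (M f) V = sum f V - f u" for f
    using inV fin by (simp add: M_def sum.distrib sum_subtractf sd)
  have Mnn: "0 \<le> M f v" if "f \<in> ?X" for f v
  proof -
    have nn: "\<forall>v. 0 \<le> f v" using that by (auto simp: XI)
    have "0 \<le> f u" "f u \<le> 1" using t01[OF that] by auto
    then show ?thesis
      using nn \<alpha>01[of "f u"] d
      by (cases "v = u"; cases "v = b"; cases "v = l") (auto simp: Mu Mb Ml Mo)
  qed
  define Q where "Q = (\<lambda>f. supp f \<union> (if f b \<noteq> 0 \<and> f u \<noteq> 0 then {l} else {}))"
  have QK: "Q f \<in> K" if "f \<in> ?X" for f
  proof -
    have s: "supp f \<in> K" using that by (auto simp: XI)
    show ?thesis
    proof (cases "f b \<noteq> 0 \<and> f u \<noteq> 0")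
      case True
      then have "insert l (supp f) \<in> K" using dom[OF s] by (auto simp: supp_def)
      then show ?thesis using True by (simp add: Q_def)
    qed (use s in \<open>auto simp add: Q_def\<close>)
  qed
  have P1u: "P1 f u = f u" for f by (simp add: P1_def Mu \<delta>_def)
  have Msupp: "v \<in> supp (P1 f)" if "M f v \<noteq> 0" for f v
  proof -
    have "v \<noteq> u" using that Mu by auto
    then show ?thesis using that by (simp add: supp_def P1_def \<delta>_def)
  qed
  have suppP1: "supp f \<union> supp (P1 f) \<subseteq> Q f" for f
  proof
    fix v assume v: "v \<in> supp f \<union> supp (P1 f)"
    show "v \<in> Q f"
    proof (cases "v \<in> supp f")
      case False
      then have fv: "f v = 0" by (simp add: supp_def)
      have P: "P1 f v \<noteq> 0" using v False by (simp add: supp_def)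
      show ?thesis
      proof (cases "v = l")
        case True
        then have "\<alpha> (f u) * f b \<noteq> 0" using P fv d by (simp add: P1_def Ml \<delta>_def)
        then have "f u \<noteq> 0" "f b \<noteq> 0" using \<alpha>0 by auto
        then show ?thesis using True by (simp add: Q_def)
      next
        case False
        then have "P1 f v = f v * (if v = b then 1 - \<alpha> (f u) else 1)"
          using d by (cases "v = u"; cases "v = b") (auto simp: P1_def Mb Mo Mu \<delta>_def)
        then show ?thesis using P fv by simp
      qed
    qed (simp add: Q_def)
  qed
  define W where "W = (\<lambda>f. if 1/4 < f u then insert c (supp (P1 f)) else supp (P1 f))"
  have P1K: "supp (P1 f) \<in> K" if "f \<in> ?X" for f
    using dc[OF QK[OF that]] suppP1 by blast
  have WK: "W f \<in> K" if "f \<in> ?X" for f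
  proof (cases "1/4 < f u")
    case True
    have "u \<in> supp (P1 f)" using True by (simp add: supp_def P1u)
    moreover have "b \<notin> supp (P1 f)" using True d \<alpha>1[OF True] by (simp add: supp_def P1_def Mb \<delta>_def)
    ultimately show ?thesis using apex[OF P1K[OF that]] True by (simp add: W_def)
  qed (use P1K[OF that] in \<open>simp add: W_def\<close>)
  have P1W: "supp (P1 f) \<subseteq> W f" for f by (auto simp: W_def)
  have P2W: "supp (P2 f) \<subseteq> W f" if "f \<in> ?X" for f
  proof
    fix v assume v: "v \<in> supp (P2 f)"
    show "v \<in> W f"
    proof (cases "v = c \<and> 1/4 < f u")
      case True then show ?thesis by (auto simp: W_def)
    next
      case F: False
      show ?thesis
      proof (cases "v = u")
        case True
        then have "f u \<noteq> 0" using v d by (auto simp: supp_def P2_def Mu \<delta>_def)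
        then have "u \<in> supp (P1 f)" by (simp add: supp_def P1u)
        then show ?thesis using True P1W by blast
      next
        case False
        have "P2 f v = M f v"
        proof (cases "v = c")
          case True
          then have "\<beta> (f u) = 0" using F \<beta>0 by auto
          then show ?thesis using False by (simp add: P2_def \<delta>_def)
        qed (use False in \<open>simp add: P2_def \<delta>_def\<close>)
        then show ?thesis using v Msupp P1W by (auto simp: supp_def)
      qed
    qed
  qed
  have RW: "supp (R f) \<subseteq> W f" if "f \<in> ?X" for f
  proof
    fix v assume v: "v \<in> supp (R f)"
    show "v \<in> W f"
    proof (cases "v = c \<and> 1/4 < f u")
      case True then show ?thesis by (auto simp: W_def)
    next
      case F: False
      have "R f v = \<gamma> (f u) * M f v"
      proof (cases "v = c")
        case True
        then have "\<gamma> (f u) * (1 - f u) = 1" using F \<gamma>q t01[OF that] by auto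
        then show ?thesis using True by (simp add: R_def \<delta>_def)
      qed (simp add: R_def \<delta>_def)
      then show ?thesis using v Msupp P1W by (auto simp: supp_def)
    qed
  qed
  have Ru: "R f u = 0" for f using d by (simp add: R_def Mu \<delta>_def)
  have P1X: "P1 f \<in> ?X" if "f \<in> ?X" for f
  proof -
    have "sum (P1 f) V = 1" using that inV fin
      by (simp add: P1_def sum.distrib sumM sd XI)
    moreover have "\<forall>v. 0 \<le> P1 f v" using Mnn[OF that] t01[OF that] by (simp add: P1_def \<delta>_def)
    ultimately show ?thesis using P1K[OF that] by (simp add: XI)
  qed
  have P2X: "P2 f \<in> ?X" if "f \<in> ?X" for f
  proof -
    have "sum (P2 f) V = sum (M f) V + f u * (1 - \<beta> (f u)) + f u * \<beta> (f u)"
      using inV by (simp add: P2_def sum.distrib sd)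
    also have "\<dots> = 1" using that by (simp add: sumM XI algebra_simps)
    finally have "sum (P2 f) V = 1" .
    moreover have "\<forall>v. 0 \<le> P2 f v" using Mnn[OF that] t01[OF that] \<beta>01[of "f u"] by (simp add: P2_def \<delta>_def)
    moreover have "supp (P2 f) \<in> K" using dc[OF WK[OF that] P2W[OF that]] .
    ultimately show ?thesis by (simp add: XI)
  qed
  have RY: "R f \<in> ?Y" if "f \<in> ?X" for f
  proof -
    have "sum (R f) V = \<gamma> (f u) * sum (M f) V + (1 - \<gamma> (f u) * (1 - f u))"
      using inV by (simp add: R_def sum.distrib sd sum_distrib_left)
    also have "\<dots> = 1" using that by (simp add: sumM XI algebra_simps)
    finally have "sum (R f) V = 1" .
    moreover have "\<forall>v. 0 \<le> R f v" using Mnn[OF that] \<gamma>le[of "f u"] t01[OF that] by (simp add: R_def \<delta>_def)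
    moreover have "supp (R f) \<in> K" using dc[OF WK[OF that] RW[OF that]] .
    moreover have "u \<notin> supp (R f)" by (simp add: supp_def Ru)
    ultimately show ?thesis by (simp add: YI)
  qed
  have RX: "R f \<in> ?X" if "f \<in> ?X" for f using RY[OF that] by (simp add: XI YI)
  have cP1: "continuous_on ?X P1"
    by (auto simp: P1_def M_def \<alpha>_def intro!: continuous_intros continuous_on_coordinatewise_then_product)
  have cP2: "continuous_on ?X P2"
    by (auto simp: P2_def M_def \<alpha>_def \<beta>_def intro!: continuous_intros continuous_on_coordinatewise_then_product)
  have cR: "continuous_on ?X R"
    by (auto simp: R_def M_def \<alpha>_def \<beta>_def \<gamma>_def intro!: continuous_intros continuous_on_coordinatewise_then_product)
  have cid: "continuous_on ?X id" by (simp add: continuous_on_id)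
  have h1: "homotopic_with (\<lambda>_. True) (top_of_set ?X) (top_of_set ?X) id P1"
    using P1X dc[OF QK suppP1] by (intro sl_homotopic[OF K cid cP1]) auto
  have h2: "homotopic_with (\<lambda>_. True) (top_of_set ?X) (top_of_set ?X) P1 P2"
    using P1X P2X dc[OF WK Un_least[OF P1W P2W]] by (intro sl_homotopic[OF K cP1 cP2]) auto
  have h3: "homotopic_with (\<lambda>_. True) (top_of_set ?X) (top_of_set ?X) P2 R"
    using RX P2X dc[OF WK Un_least[OF P2W RW]] by (intro sl_homotopic[OF K cP2 cR]) auto
  have H1: "homotopic_with (\<lambda>_. True) (top_of_set ?X) (top_of_set ?X) (id \<circ> R) id"
    using homotopic_with_trans[OF homotopic_with_trans[OF h1 h2] h3]
    by (simp add: homotopic_with_sym)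
  have YX: "?Y \<subseteq> ?X" by (auto simp: XI YI)
  have Rid: "R f = f" if "f \<in> ?Y" for f
  proof -
    have "f u = 0" using that by (auto simp: YI supp_def)
    then show ?thesis by (simp add: R_def M_def \<alpha>0 \<gamma>0 \<delta>_def fun_eq_iff)
  qed
  have H2: "homotopic_with (\<lambda>_. True) (top_of_set ?Y) (top_of_set ?Y) (R \<circ> id) id"
    by (rule homotopic_with_equal) (auto simp: Rid continuous_on_subset[OF cR YX] RY YX[THEN subsetD])
  show ?thesis
    unfolding homotopy_equivalent_space_def
    by (intro exI[of _ R] exI[of _ id] conjI H1 H2)
       (auto simp: cR RY continuous_on_id YX[THEN subsetD])
qed



lemma iso_homeomorphic:
  fixes \<psi> :: "'a \<Rightarrow> 'b"
  assumes fin: "finite V1" and bij: "bij_betw \<psi> V1 V2"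
    and K1: "K1 \<subseteq> Pow V1" and K2: "K2 \<subseteq> Pow V2"
    and iff: "\<And>\<sigma>. \<sigma> \<subseteq> V1 \<Longrightarrow> \<sigma> \<in> K1 \<longleftrightarrow> \<psi> ` \<sigma> \<in> K2"
  shows "top_of_set (geom_real K1) homeomorphic_space top_of_set (geom_real K2)"
proof -
  have fin2: "finite V2" using bij fin bij_betw_finite by blast
  define \<rho> where "\<rho> = inv_into V1 \<psi>"
  have bij2: "bij_betw \<rho> V2 V1" using bij by (simp add: \<rho>_def bij_betw_inv_into)
  have \<rho>\<psi>: "\<rho> (\<psi> v) = v" if "v \<in> V1" for v
    using bij that by (simp add: \<rho>_def bij_betw_inv_into_left)
  have \<psi>\<rho>: "\<psi> (\<rho> w) = w" if "w \<in> V2" for w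
    using bij that by (simp add: \<rho>_def bij_betw_inv_into_right)
  have \<psi>V: "\<psi> v \<in> V2" if "v \<in> V1" for v using bij that bij_betwE by blast
  have \<rho>V: "\<rho> w \<in> V1" if "w \<in> V2" for w using bij2 that bij_betwE by blast
  define F where "F = (\<lambda>f w. if w \<in> V2 then f (\<rho> w) else (0::real))"
  define G where "G = (\<lambda>g v. if v \<in> V1 then g (\<psi> v) else (0::real))"
  let ?X = "geom_real K1" and ?Y = "geom_real K2"
  have XI: "f \<in> ?X \<longleftrightarrow> (\<forall>v. 0 \<le> f v) \<and> supp f \<in> K1 \<and> sum f V1 = 1" for f
    using geom_real_iff[OF fin K1] .
  have YI: "f \<in> ?Y \<longleftrightarrow> (\<forall>v. 0 \<le> f v) \<and> supp f \<in> K2 \<and> sum f V2 = 1" for f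
    using geom_real_iff[OF fin2 K2] .
  have sX: "supp f \<subseteq> V1" if "f \<in> ?X" for f using that K1 by (auto simp: XI)
  have sY: "supp f \<subseteq> V2" if "f \<in> ?Y" for f using that K2 by (auto simp: YI)
  have FX: "F f \<in> ?Y" if f: "f \<in> ?X" for f
  proof -
    have "supp (F f) = \<psi> ` supp f"
    proof (intro set_eqI iffI)
      fix w assume "w \<in> supp (F f)"
      then have "w \<in> V2" "f (\<rho> w) \<noteq> 0" by (auto simp: F_def supp_def split: if_splits)
      then show "w \<in> \<psi> ` supp f" using \<psi>\<rho> by (force simp: supp_def)
    next
      fix w assume "w \<in> \<psi> ` supp f"
      then obtain v where "v \<in> supp f" "w = \<psi> v" by auto
      then show "w \<in> supp (F f)" using sX[OF f] \<psi>V \<rho>\<psi> by (auto simp: F_def supp_def)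
    qed
    moreover have "\<psi> ` supp f \<in> K2" using iff[OF sX[OF f]] f by (simp add: XI)
    moreover have "sum (F f) V2 = sum f V1"
    proof -
      have "sum (F f) V2 = sum (\<lambda>w. f (\<rho> w)) V2" by (simp add: F_def)
      also have "\<dots> = sum f V1" using sum.reindex_bij_betw[OF bij2, of f] by simp
      finally show ?thesis .
    qed
    ultimately show ?thesis using f by (simp add: XI YI F_def)
  qed
  have GY: "G g \<in> ?X" if g: "g \<in> ?Y" for g
  proof -
    have "supp (G g) \<subseteq> V1" by (auto simp: G_def supp_def)
    moreover have "\<psi> ` supp (G g) = supp g"
    proof (intro set_eqI iffI)
      fix w assume "w \<in> \<psi> ` supp (G g)"
      then show "w \<in> supp g" by (auto simp: G_def supp_def split: if_splits)
    next
      fix w assume w: "w \<in> supp g"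
      then have "w \<in> V2" using sY[OF g] by auto
      then have "\<rho> w \<in> supp (G g)" "w = \<psi> (\<rho> w)" using w \<psi>\<rho> \<rho>V by (auto simp: G_def supp_def)
      then show "w \<in> \<psi> ` supp (G g)" by blast
    qed
    ultimately have "supp (G g) \<in> K1" using iff g by (auto simp: YI)
    moreover have "sum (G g) V1 = sum g V2"
    proof -
      have "sum (G g) V1 = sum (\<lambda>v. g (\<psi> v)) V1" by (simp add: G_def)
      also have "\<dots> = sum g V2" using sum.reindex_bij_betw[OF bij, of g] by simp
      finally show ?thesis .
    qed
    ultimately show ?thesis using g by (simp add: XI YI G_def)
  qed
  have GF: "G (F f) = f" if f: "f \<in> ?X" for f
  proof
    fix v show "G (F f) v = f v"
      using sX[OF f] \<psi>V \<rho>\<psi> by (cases "v \<in> V1") (auto simp: G_def F_def supp_def)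
  qed
  have FG: "F (G g) = g" if g: "g \<in> ?Y" for g
  proof
    fix w show "F (G g) w = g w"
      using sY[OF g] \<psi>\<rho> \<rho>V by (cases "w \<in> V2") (auto simp: G_def F_def supp_def)
  qed
  have cF: "continuous_on ?X F"
    unfolding F_def
    by (intro continuous_on_coordinatewise_then_product, case_tac "i \<in> V2") (auto intro!: continuous_intros)
  have cG: "continuous_on ?Y G"
    unfolding G_def
    by (intro continuous_on_coordinatewise_then_product, case_tac "i \<in> V1") (auto intro!: continuous_intros)
  show ?thesis
    unfolding homeomorphic_space_def homeomorphic_maps_def
    by (intro exI[of _ F] exI[of _ G] conjI) (auto simp: cF cG FX GY GF FG)
qed



definition MV :: "nat \<Rightarrow> nat \<Rightarrow> (nat \<times> nat) set" where
  "MV n m = {(t,k). t < 3 \<and> k < n} \<union> {(t,k). t = 3 \<and> k < m}"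

definition Tk :: "nat \<Rightarrow> nat \<Rightarrow> (nat \<times> nat) set" where
  "Tk n k = {(1, (k + n - 1) mod n), (0, k), (2, k)}"

definition Uk :: "nat \<Rightarrow> (nat \<times> nat) set" where
  "Uk k = {(0, k), (1, k), (3, k)}"

definition MK :: "nat \<Rightarrow> nat \<Rightarrow> (nat \<times> nat) set set" where
  "MK n m = {\<sigma>. \<sigma> \<subseteq> MV n m \<and> (\<forall>k<n. \<not> Tk n k \<subseteq> \<sigma>) \<and> (\<forall>k<m. \<not> Uk k \<subseteq> \<sigma>)}"

lemma MV_finite: "finite (MV n m)"
proof -
  have "MV n m \<subseteq> {..<4} \<times> {..<max n m}" by (auto simp: MV_def)
  then show ?thesis by (rule finite_subset) auto
qed

lemma MK_cplx: "cplx (MV n m) (MK n m)"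
  unfolding cplx_def MK_def using MV_finite by blast

lemma pred_mod: "0 < (n::nat) \<Longrightarrow> m < n \<Longrightarrow> (m + n - 1) mod n = (if m = 0 then n - 1 else m - 1)"
proof (cases "m = 0")
  case False
  assume "m < n"
  have "m + n - 1 = (m - 1) + n" using False by linarith
  then have "(m + n - 1) mod n = (m - 1) mod n" by simp
  then show ?thesis using False \<open>m < n\<close> by simp
qed simp

lemma suc_mod: "x < (n::nat) \<Longrightarrow> Suc x mod n = (if Suc x = n then 0 else Suc x)"
  by auto

lemma step_equiv:
  assumes n: "2 \<le> n" and j: "j < n"
  shows "top_of_set (geom_real (MK n (Suc j))) homotopy_equivalent_space top_of_set (geom_real (MK n j))"
proof -
  have pm: "(Suc j mod n + n - 1) mod n = j"
    using j n by (auto simp: suc_mod pred_mod)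
  have eq: "{\<sigma>\<in>MK n (Suc j). (3, j) \<notin> \<sigma>} = MK n j"
  proof (intro set_eqI iffI)
    fix \<sigma> assume "\<sigma> \<in> {\<sigma>\<in>MK n (Suc j). (3, j) \<notin> \<sigma>}"
    then show "\<sigma> \<in> MK n j" by (auto simp: MK_def MV_def less_Suc_eq subset_iff)
  next
    fix \<sigma> assume s: "\<sigma> \<in> MK n j"
    then have "(3, j) \<notin> \<sigma>" by (auto simp: MK_def MV_def)
    then show "\<sigma> \<in> {\<sigma>\<in>MK n (Suc j). (3, j) \<notin> \<sigma>}" using s
      by (auto simp: MK_def MV_def less_Suc_eq Uk_def)
  qed
  have "top_of_set (geom_real (MK n (Suc j))) homotopy_equivalent_space
        top_of_set (geom_real {\<sigma>\<in>MK n (Suc j). (3, j) \<notin> \<sigma>})"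
  proof (rule cone_collapse[OF MK_cplx, where b = "(1, j)" and l = "(2, j)" and c = "(2, Suc j mod n)"])
    fix \<sigma> assume s: "\<sigma> \<in> MK n (Suc j)" and u: "(3, j) \<in> \<sigma>" and b: "(1, j) \<in> \<sigma>"
    show "insert (2, j) \<sigma> \<in> MK n (Suc j)"
      unfolding MK_def
    proof (intro CollectI conjI allI impI)
      show "insert (2, j) \<sigma> \<subseteq> MV n (Suc j)" using s j by (auto simp: MK_def MV_def)
    next
      fix k assume k: "k < n"
      show "\<not> Tk n k \<subseteq> insert (2, j) \<sigma>"
      proof
        assume T: "Tk n k \<subseteq> insert (2, j) \<sigma>"
        show False
        proof (cases "k = j")
          case True
          then have "(0, j) \<in> \<sigma>" using T by (auto simp: Tk_def)
          then have "Uk j \<subseteq> \<sigma>" using u b by (auto simp: Uk_def)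
          then show False using s by (auto simp: MK_def)
        next
          case False
          then have "Tk n k \<subseteq> \<sigma>" using T by (auto simp: Tk_def)
          then show False using s k by (auto simp: MK_def)
        qed
      qed
    next
      fix k assume k: "k < Suc j"
      show "\<not> Uk k \<subseteq> insert (2, j) \<sigma>"
        using s k by (auto simp: MK_def Uk_def)
    qed
  next
    fix \<sigma> assume s: "\<sigma> \<in> MK n (Suc j)" and u: "(3, j) \<in> \<sigma>" and b: "(1, j) \<notin> \<sigma>"
    show "insert (2, Suc j mod n) \<sigma> \<in> MK n (Suc j)"
      unfolding MK_def
    proof (intro CollectI conjI allI impI)
      show "insert (2, Suc j mod n) \<sigma> \<subseteq> MV n (Suc j)" using s j n by (auto simp: MK_def MV_def)
    next
      fix k assume k: "k < n"
      show "\<not> Tk n k \<subseteq> insert (2, Suc j mod n) \<sigma>"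
      proof
        assume T: "Tk n k \<subseteq> insert (2, Suc j mod n) \<sigma>"
        show False
        proof (cases "k = Suc j mod n")
          case True
          then have "(1, j) \<in> \<sigma>" using T pm by (auto simp: Tk_def)
          then show False using b by simp
        next
          case False
          then have "Tk n k \<subseteq> \<sigma>" using T by (auto simp: Tk_def)
          then show False using s k by (auto simp: MK_def)
        qed
      qed
    next
      fix k assume k: "k < Suc j"
      show "\<not> Uk k \<subseteq> insert (2, Suc j mod n) \<sigma>"
        using s k by (auto simp: MK_def Uk_def)
    qed
  qed (use j in \<open>auto simp: MV_def\<close>)
  then show ?thesis by (simp add: eq)
qed

lemma chain_equiv:
  assumes n: "2 \<le> n"
  shows "j \<le> n \<Longrightarrow> top_of_set (geom_real (MK n j)) homotopy_equivalent_space top_of_set (geom_real (MK n 0))"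
proof (induction j)
  case 0 then show ?case by (simp add: homotopy_equivalent_space_refl)
next
  case (Suc j)
  then show ?case using step_equiv[OF n, of j] homotopy_eqv_trans by auto
qed



lemma matching_iff:
  fixes \<psi> :: "'a \<Rightarrow> 'b set"
  assumes inj: "inj_on \<psi> V" and img: "\<psi> ` V = E" and fin: "finite V" and \<sigma>: "\<sigma> \<subseteq> V"
   and nb: "\<And>v. card {x\<in>V. v \<in> \<psi> x} \<le> 2 \<or> {x\<in>V. v \<in> \<psi> x} \<in> NF"
   and NF: "\<And>N. N \<in> NF \<Longrightarrow> card N = 3 \<and> (\<exists>v. {x\<in>V. v \<in> \<psi> x} = N)"
  shows "\<psi> ` \<sigma> \<in> two_matchings E \<longleftrightarrow> (\<forall>N\<in>NF. \<not> N \<subseteq> \<sigma>)"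
proof -
  have ce: "card {e \<in> \<psi> ` \<sigma>. v \<in> e} = card (\<sigma> \<inter> {x\<in>V. v \<in> \<psi> x})" for v
  proof -
    have "{e \<in> \<psi> ` \<sigma>. v \<in> e} = \<psi> ` (\<sigma> \<inter> {x\<in>V. v \<in> \<psi> x})" using \<sigma> by auto
    moreover have "inj_on \<psi> (\<sigma> \<inter> {x\<in>V. v \<in> \<psi> x})" using inj by (rule inj_on_subset) auto
    ultimately show ?thesis by (simp add: card_image)
  qed
  have sub: "\<psi> ` \<sigma> \<subseteq> E" using img \<sigma> by auto
  have finN: "finite (\<sigma> \<inter> {x\<in>V. v \<in> \<psi> x})" "finite {x\<in>V. v \<in> \<psi> x}" for v using fin by auto
  show ?thesis
  proof
    assume tm: "\<psi> ` \<sigma> \<in> two_matchings E"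
    show "\<forall>N\<in>NF. \<not> N \<subseteq> \<sigma>"
    proof (intro ballI notI)
      fix N assume N: "N \<in> NF" and Ns: "N \<subseteq> \<sigma>"
      obtain v where v: "{x\<in>V. v \<in> \<psi> x} = N" and c3: "card N = 3" using NF[OF N] by blast
      have "\<sigma> \<inter> {x\<in>V. v \<in> \<psi> x} = N" using v Ns by auto
      then have "card {e \<in> \<psi> ` \<sigma>. v \<in> e} = 3" using ce c3 by simp
      then show False using tm by (auto simp: two_matchings_def dest: spec[of _ v])
    qed
  next
    assume H: "\<forall>N\<in>NF. \<not> N \<subseteq> \<sigma>"
    have "card {e \<in> \<psi> ` \<sigma>. v \<in> e} \<le> 2" for v
    proof (cases "card {x\<in>V. v \<in> \<psi> x} \<le> 2")
      case True
      have "card (\<sigma> \<inter> {x\<in>V. v \<in> \<psi> x}) \<le> card {x\<in>V. v \<in> \<psi> x}"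
        by (rule card_mono[OF finN(2)]) auto
      then show ?thesis using True ce by simp
    next
      case False
      then have N: "{x\<in>V. v \<in> \<psi> x} \<in> NF" using nb by auto
      then have c3: "card {x\<in>V. v \<in> \<psi> x} = 3" using NF by blast
      have "\<sigma> \<inter> {x\<in>V. v \<in> \<psi> x} \<subset> {x\<in>V. v \<in> \<psi> x}" using H N by auto
      then have "card (\<sigma> \<inter> {x\<in>V. v \<in> \<psi> x}) < 3" using c3 psubset_card_mono[OF finN(2)] by metis
      then show ?thesis using ce by simp
    qed
    then show "\<psi> ` \<sigma> \<in> two_matchings E" using sub by (simp add: two_matchings_def)
  qed
qed

lemma sucmod_iff:
  assumes i: "i < (n::nat)" and v: "v < n"
  shows "(Suc i mod n = v \<longleftrightarrow> i = (v + n - 1) mod n)"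
proof -
  have n: "0 < n" using i by simp
  show ?thesis unfolding suc_mod[OF i] pred_mod[OF n v] using i v by (simp split: if_splits; arith)
qed

lemma cyc_inj:
  assumes "3 \<le> (n::nat)" "i < n" "j < n" "{i, Suc i mod n} = {j, Suc j mod n}"
  shows "i = j"
  using assms by (auto simp: doubleton_eq_iff suc_mod split: if_splits)

lemma Tk_card: "card (Tk n k) = 3" by (simp add: Tk_def)
lemma Uk_card: "card (Uk k) = 3" by (simp add: Uk_def)



definition \<psi>W :: "nat \<Rightarrow> nat \<times> nat \<Rightarrow> (nat + nat) set" where
  "\<psi>W n = (\<lambda>(t,k). if t = 0 then {Inl (2*k), Inl (Suc (2*k))}
     else if t = 1 then {Inl (Suc (2*k)), Inl (Suc (Suc (2*k)) mod (2*n))}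
     else if t = 2 then {Inl (2*k), Inr (2*k)} else {Inl (Suc (2*k)), Inr (Suc (2*k))})"

lemma sm2: "k < n \<Longrightarrow> Suc (Suc (2*k)) mod (2*n) = (if Suc k = n then 0 else Suc (Suc (2*k)))"
  by auto

lemma dv2: assumes "k < n" shows "(2*n dvd Suc (Suc (2*k))) = (Suc k = n)"
proof -
  have e: "Suc (Suc (2*k)) = 2 * Suc k" by simp
  have "(2*n dvd Suc (Suc (2*k))) = (n dvd Suc k)" using nat_mult_dvd_cancel1[of 2 n "Suc k"] by simp
  also have "\<dots> = (Suc k = n)" using assms dvd_imp_le[of n "Suc k"] by auto
  finally show ?thesis .
qed

lemma par1 [simp]: "(2*a = Suc (2*b)) = False" "(Suc (2*b) = 2*a) = False" for a b :: nat
  by presburger+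

lemma MV_mem: "(t,k) \<in> MV n m \<longleftrightarrow> (t < 3 \<and> k < n) \<or> (t = 3 \<and> k < m)"
  by (auto simp: MV_def)

lemma nbW_even:
  assumes n: "2 \<le> n" and m: "m < n"
  shows "{x\<in>MV n n. Inl (2*m) \<in> \<psi>W n x} = Tk n m"
proof (intro set_eqI)
  fix x :: "nat \<times> nat"
  obtain t k where x: "x = (t,k)" by (cases x)
  have p: "(m + n - Suc 0) mod n = (if m = 0 then n - 1 else m - 1)" using pred_mod[of n m] m by simp
  show "x \<in> {x\<in>MV n n. Inl (2*m) \<in> \<psi>W n x} \<longleftrightarrow> x \<in> Tk n m"
    unfolding x Tk_def using m n
    by (auto simp: MV_mem \<psi>W_def sm2 p dv2 split: if_splits)
qed

lemma nbW_odd: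
  assumes n: "2 \<le> n" and m: "m < n"
  shows "{x\<in>MV n n. Inl (Suc (2*m)) \<in> \<psi>W n x} = Uk m"
proof (intro set_eqI)
  fix x :: "nat \<times> nat"
  obtain t k where x: "x = (t,k)" by (cases x)
  show "x \<in> {x\<in>MV n n. Inl (Suc (2*m)) \<in> \<psi>W n x} \<longleftrightarrow> x \<in> Uk m"
    unfolding x Uk_def using m n
    by (auto simp: MV_mem \<psi>W_def sm2 dv2 split: if_splits)
qed

lemma nbW_big:
  assumes "2*n \<le> i"
  shows "{x\<in>MV n n. Inl i \<in> \<psi>W n x} = {}"
  using assms by (auto simp: MV_def \<psi>W_def sm2 dv2 split: if_splits)

lemma nbW_inr: "{x\<in>MV n n. Inr i \<in> \<psi>W n x} \<subseteq> {(2, i div 2), (3, i div 2)}"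
  by (auto simp: MV_def \<psi>W_def split: if_splits)

lemma \<psi>W_inj: "2 \<le> n \<Longrightarrow> inj_on (\<psi>W n) (MV n n)"
  unfolding inj_on_def
  by (auto simp: MV_def \<psi>W_def sm2 doubleton_eq_iff split: if_splits)

lemma \<psi>W_img:
  assumes n: "2 \<le> n"
  shows "\<psi>W n ` MV n n = whiskered_edges (cycle_vertices (2*n)) (cycle_edges (2*n))"
proof (intro set_eqI iffI)
  fix e assume "e \<in> \<psi>W n ` MV n n"
  then obtain t k where tk: "(t,k) \<in> MV n n" and e: "e = \<psi>W n (t,k)" by auto
  have k: "k < n" using tk by (auto simp: MV_def)
  have s1: "Suc (2*k) mod (2*n) = Suc (2*k)" using k by simp
  have c0: "{2*k, Suc (2*k)} \<in> cycle_edges (2*n)"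
    unfolding cycle_edges_def using k s1 by (auto intro!: exI[of _ "2*k"])
  have c1: "{Suc (2*k), Suc (Suc (2*k)) mod (2*n)} \<in> cycle_edges (2*n)"
    unfolding cycle_edges_def using k by (auto intro!: exI[of _ "Suc (2*k)"])
  have tcases: "t = 0 \<or> t = 1 \<or> t = 2 \<or> t = 3" using tk by (auto simp: MV_def)
  have w0: "{Inl (2*k), Inl (Suc (2*k))} \<in> {{Inl u, Inl v} | u v. {u, v} \<in> cycle_edges (2*n)}"
    using c0 by blast
  have w1: "{Inl (Suc (2*k)), Inl (Suc (Suc (2*k)) mod (2*n))} \<in> {{Inl u, Inl v} | u v. {u, v} \<in> cycle_edges (2*n)}"
    using c1 by blast
  have w2: "{Inl (2*k), Inr (2*k)} \<in> {{Inl v, Inr v} | v. v \<in> cycle_vertices (2*n)}"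
    using k unfolding cycle_vertices_def by auto
  have w3: "{Inl (Suc (2*k)), Inr (Suc (2*k))} \<in> {{Inl v, Inr v} | v. v \<in> cycle_vertices (2*n)}"
    using k unfolding cycle_vertices_def by auto
  show "e \<in> whiskered_edges (cycle_vertices (2*n)) (cycle_edges (2*n))"
    unfolding whiskered_edges_def using tcases w0 w1 w2 w3 by (auto simp: e \<psi>W_def)
next
  fix e assume "e \<in> whiskered_edges (cycle_vertices (2*n)) (cycle_edges (2*n))"
  then consider (a) u v i where "e = {Inl u, Inl v}" "{u, v} = {i, Suc i mod (2*n)}" "i < 2*n"
    | (b) v where "e = {Inl v, Inr v}" "v < 2*n"
    unfolding whiskered_edges_def cycle_edges_def cycle_vertices_def by blast
  then show "e \<in> \<psi>W n ` MV n n"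
  proof cases
    case (a u v i)
    have e: "e = {Inl i, Inl (Suc i mod (2*n))}" using a(1,2) by (auto simp: doubleton_eq_iff)
    show ?thesis
    proof (cases "even i")
      case True
      then obtain k where i: "i = 2*k" by (rule evenE)
      then have k: "k < n" using a(3) by simp
      have "Suc i mod (2*n) = Suc (2*k)" using k i by simp
      then have "e = \<psi>W n (0,k)" using e i by (simp add: \<psi>W_def)
      moreover have "(0,k) \<in> MV n n" using k by (simp add: MV_def)
      ultimately show ?thesis by blast
    next
      case False
      then obtain k where i: "i = Suc (2*k)" by (auto elim: oddE)
      then have k: "k < n" using a(3) by simp
      have "e = \<psi>W n (1,k)" using e i by (simp add: \<psi>W_def)
      moreover have "(1,k) \<in> MV n n" using k by (simp add: MV_def)
      ultimately show ?thesis by blast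
    qed
  next
    case (b v)
    show ?thesis
    proof (cases "even v")
      case True
      then obtain k where i: "v = 2*k" by (rule evenE)
      then have k: "k < n" using b(2) by simp
      have "e = \<psi>W n (2,k)" using b i by (simp add: \<psi>W_def)
      moreover have "(2,k) \<in> MV n n" using k by (simp add: MV_def)
      ultimately show ?thesis by blast
    next
      case False
      then obtain k where i: "v = Suc (2*k)" by (auto elim: oddE)
      then have k: "k < n" using b(2) by simp
      have "e = \<psi>W n (3,k)" using b i by (simp add: \<psi>W_def)
      moreover have "(3,k) \<in> MV n n" using k by (simp add: MV_def)
      ultimately show ?thesis by blast
    qed
  qed
qed



lemma W_homeo:
  assumes n: "2 \<le> n"
  shows "top_of_set (geom_real (MK n n)) homeomorphic_space
         top_of_set (geom_real (two_matchings (whiskered_edges (cycle_vertices (2*n)) (cycle_edges (2*n)))))"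
proof (rule iso_homeomorphic[OF MV_finite])
  let ?E = "whiskered_edges (cycle_vertices (2*n)) (cycle_edges (2*n))"
  show "bij_betw (\<psi>W n) (MV n n) ?E" using \<psi>W_inj[OF n] \<psi>W_img[OF n] by (simp add: bij_betw_def)
  show "MK n n \<subseteq> Pow (MV n n)" by (auto simp: MK_def)
  show "two_matchings ?E \<subseteq> Pow ?E" by (auto simp: two_matchings_def)
  fix \<sigma> assume \<sigma>: "\<sigma> \<subseteq> MV n n"
  let ?NF = "{Tk n k | k. k < n} \<union> {Uk k | k. k < n}"
  have "\<psi>W n ` \<sigma> \<in> two_matchings ?E \<longleftrightarrow> (\<forall>N\<in>?NF. \<not> N \<subseteq> \<sigma>)"
  proof (rule matching_iff[OF \<psi>W_inj[OF n] \<psi>W_img[OF n] MV_finite \<sigma>])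
    fix v :: "nat + nat"
    show "card {x\<in>MV n n. v \<in> \<psi>W n x} \<le> 2 \<or> {x\<in>MV n n. v \<in> \<psi>W n x} \<in> ?NF"
    proof (cases v)
      case (Inl i)
      show ?thesis
      proof (cases "i < 2*n")
        case True
        show ?thesis
        proof (cases "even i")
          case True
          then obtain m where i: "i = 2*m" by (rule evenE)
          then have "m < n" using \<open>i < 2*n\<close> by simp
          then show ?thesis using nbW_even[OF n] Inl i by blast
        next
          case False
          then obtain m where i: "i = Suc (2*m)" by (auto elim: oddE)
          then have "m < n" using \<open>i < 2*n\<close> by simp
          then show ?thesis using nbW_odd[OF n] Inl i by blast
        qed
      next
        case False
        then have E: "{x\<in>MV n n. v \<in> \<psi>W n x} = {}" using nbW_big[of n i] Inl by simp
        show ?thesis by (rule disjI1, subst E, simp)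
      qed
    next
      case (Inr i)
      have "card {x\<in>MV n n. v \<in> \<psi>W n x} \<le> card {(2::nat, i div 2), (3::nat, i div 2)}"
        using nbW_inr[of n i] Inr by (intro card_mono) auto
      also have "\<dots> \<le> 2" by (rule card_insert_le_m1) auto
      finally show ?thesis by simp
    qed
  next
    fix N assume "N \<in> ?NF"
    then show "card N = 3 \<and> (\<exists>v. {x\<in>MV n n. v \<in> \<psi>W n x} = N)"
    proof
      assume "N \<in> {Tk n k | k. k < n}"
      then obtain k where "N = Tk n k" "k < n" by blast
      then show ?thesis using nbW_even[OF n, of k] Tk_card by blast
    next
      assume "N \<in> {Uk k | k. k < n}"
      then obtain k where "N = Uk k" "k < n" by blast
      then show ?thesis using nbW_odd[OF n, of k] Uk_card by blast
    qed
  qed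
  moreover have "\<sigma> \<in> MK n n \<longleftrightarrow> (\<forall>N\<in>?NF. \<not> N \<subseteq> \<sigma>)" using \<sigma> by (auto simp: MK_def)
  ultimately show "\<sigma> \<in> MK n n \<longleftrightarrow> \<psi>W n ` \<sigma> \<in> two_matchings ?E" by simp
qed



definition \<psi>C :: "nat \<Rightarrow> nat \<times> nat \<Rightarrow> nat claw_vertex set" where
  "\<psi>C n = (\<lambda>(t,k). if t = 0 then {Orig k, Sub {k, Suc k mod n}}
     else if t = 1 then {Orig (Suc k mod n), Sub {k, Suc k mod n}}
     else {Orig k, Leaf k 0})"

lemma cyc_eq: "3 \<le> (n::nat) \<Longrightarrow> i < n \<Longrightarrow> j < n \<Longrightarrow> ({i, Suc i mod n} = {j, Suc j mod n}) = (i = j)"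
  using cyc_inj by blast

lemma suc_mod_ne: "2 \<le> (n::nat) \<Longrightarrow> k < n \<Longrightarrow> Suc k mod n \<noteq> k"
  by (simp add: suc_mod)

lemma cyc_mem: "{e \<in> cycle_edges n. v \<in> e} = {{i, Suc i mod n} | i. i < n \<and> (v = i \<or> v = Suc i mod n)}"
  by (auto simp: cycle_edges_def)

lemma deg_cyc:
  assumes n: "3 \<le> n" and v: "v < n"
  shows "deg (cycle_edges n) v = 2"
proof -
  define p where "p = (v + n - 1) mod n"
  have p: "p < n" using v by (simp add: p_def)
  have sp: "Suc p mod n = v" using sucmod_iff[OF p v] by (simp add: p_def)
  have "{e \<in> cycle_edges n. v \<in> e} = {{v, Suc v mod n}, {p, Suc p mod n}}"
  proof -
    have eqv: "(v = i \<or> v = Suc i mod n) \<longleftrightarrow> (i = v \<or> i = p)" if "i < n" for i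
      using sucmod_iff[OF that v] by (auto simp: p_def)
    show ?thesis unfolding cyc_mem
    proof (intro set_eqI iffI)
      fix e assume "e \<in> {{i, Suc i mod n} | i. i < n \<and> (v = i \<or> v = Suc i mod n)}"
      then obtain i where i: "i < n" "v = i \<or> v = Suc i mod n" "e = {i, Suc i mod n}" by blast
      then have "i = v \<or> i = p" using eqv by blast
      then show "e \<in> {{v, Suc v mod n}, {p, Suc p mod n}}" using i by auto
    next
      fix e assume "e \<in> {{v, Suc v mod n}, {p, Suc p mod n}}"
      then have "e = {v, Suc v mod n} \<or> e = {p, Suc p mod n}" by simp
      then show "e \<in> {{i, Suc i mod n} | i. i < n \<and> (v = i \<or> v = Suc i mod n)}"
      proof
        assume "e = {v, Suc v mod n}" then show ?thesis using v by blast
      next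
        assume "e = {p, Suc p mod n}" then show ?thesis using p sp by blast
      qed
    qed
  qed
  moreover have "p \<noteq> v" using sp suc_mod_ne[of n p] n p by auto
  then have "{v, Suc v mod n} \<noteq> {p, Suc p mod n}" using cyc_eq[OF n v p] by auto
  ultimately show ?thesis by (simp add: deg_def)
qed

lemma os_eq: "({Orig a, Sub e} = {Orig a', Sub e'}) = (a = a' \<and> e = e')"
  by (auto simp: doubleton_eq_iff)
lemma os_ol: "{Orig a, Sub e} \<noteq> {Orig a', Leaf b j}"
  by (auto simp: doubleton_eq_iff)
lemma ol_eq: "({Orig a, Leaf a j} = {Orig a', Leaf a' j'}) = (a = a' \<and> j = j')"
  by (auto simp: doubleton_eq_iff)

lemma \<psi>C_inj: "3 \<le> n \<Longrightarrow> inj_on (\<psi>C n) (MV n 0)"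
  unfolding inj_on_def
proof (intro ballI impI)
  fix x y assume n: "3 \<le> n" and x: "x \<in> MV n 0" and y: "y \<in> MV n 0" and e: "\<psi>C n x = \<psi>C n y"
  obtain t k where xx: "x = (t,k)" "t < 3" "k < n" using x by (auto simp: MV_def)
  obtain t' k' where yy: "y = (t',k')" "t' < 3" "k' < n" using y by (auto simp: MV_def)
  have sne: "Suc k mod n \<noteq> k" "Suc k' mod n \<noteq> k'" using suc_mod_ne[of n] n xx yy by auto
  have ce: "({k, Suc k mod n} = {k', Suc k' mod n}) = (k = k')" using cyc_eq[OF n xx(3) yy(3)] .
  have ce2: "({k', Suc k' mod n} = {k, Suc k mod n}) = (k = k')" using cyc_eq[OF n yy(3) xx(3)] by auto
  have "t = t' \<and> k = k'"
    using e sne xx(2) yy(2) unfolding xx(1) yy(1) \<psi>C_def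
    by (simp add: os_eq os_ol os_ol[symmetric] ol_eq ce ce2 split: if_splits; linarith?)
  then show "x = y" using xx yy by simp
qed

lemma nbC_orig:
  assumes n: "3 \<le> n" and v: "v < n"
  shows "{x\<in>MV n 0. Orig v \<in> \<psi>C n x} = Tk n v"
proof (intro set_eqI)
  fix x :: "nat \<times> nat"
  obtain t k where x: "x = (t,k)" by (cases x)
  show "x \<in> {x\<in>MV n 0. Orig v \<in> \<psi>C n x} \<longleftrightarrow> x \<in> Tk n v"
  proof (cases "k < n")
    case True
    have "(v + n - 1) mod n < n" using v by simp
    then show ?thesis unfolding x Tk_def using sucmod_iff[OF True v] True v n
      by (auto simp: MV_mem \<psi>C_def split: if_splits)
  next
    case False
    have "(v + n - 1) mod n < n" using v by simp
    then show ?thesis unfolding x Tk_def using False v by (auto simp: MV_mem)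
  qed
qed

lemma nbC_big:
  assumes "n \<le> v"
  shows "{x\<in>MV n 0. Orig v \<in> \<psi>C n x} = {}"
proof -
  have "Suc k mod n \<noteq> v" if "k < n" for k using that assms
  proof -
    have "Suc k mod n < n" using that by simp
    then show ?thesis using assms by simp
  qed
  then show ?thesis using assms by (auto simp: MV_def \<psi>C_def split: if_splits)
qed

lemma nbC_sub:
  assumes n: "3 \<le> n"
  shows "card {x\<in>MV n 0. Sub e \<in> \<psi>C n x} \<le> 2"
proof (cases "\<exists>k<n. e = {k, Suc k mod n}")
  case True
  then obtain k where k: "k < n" "e = {k, Suc k mod n}" by blast
  have "{x\<in>MV n 0. Sub e \<in> \<psi>C n x} \<subseteq> {(0,k), (1,k)}"
  proof
    fix x assume "x \<in> {x\<in>MV n 0. Sub e \<in> \<psi>C n x}"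
    then have xm: "x \<in> MV n 0" "Sub e \<in> \<psi>C n x" by auto
    obtain t k' where x0: "x = (t,k')" by (cases x)
    then have x: "x = (t,k')" "t < 3" "k' < n" "Sub e \<in> \<psi>C n (t,k')"
      using xm by (auto simp: MV_def)
    then have t: "t = 0 \<or> t = 1" and ek: "e = {k', Suc k' mod n}"
      by (auto simp: \<psi>C_def split: if_splits)
    have "{k', Suc k' mod n} = {k, Suc k mod n}" using ek k(2) by simp
    then have "k' = k" using cyc_inj[OF n x(3) k(1)] by blast
    then show "x \<in> {(0,k), (1,k)}" using x(1) t by auto
  qed
  then have "card {x\<in>MV n 0. Sub e \<in> \<psi>C n x} \<le> card {(0::nat,k), (1::nat,k)}"
    by (intro card_mono) auto
  also have "\<dots> \<le> 2" by (rule card_insert_le_m1) auto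
  finally show ?thesis .
next
  case False
  have E: "{x\<in>MV n 0. Sub e \<in> \<psi>C n x} = {}"
  proof (intro equals0I)
    fix x assume "x \<in> {x\<in>MV n 0. Sub e \<in> \<psi>C n x}"
    then have xm: "x \<in> MV n 0" "Sub e \<in> \<psi>C n x" by auto
    obtain t k' where x0: "x = (t,k')" by (cases x)
    then have x: "x = (t,k')" "t < 3" "k' < n" "Sub e \<in> \<psi>C n (t,k')"
      using xm by (auto simp: MV_def)
    then have "e = {k', Suc k' mod n}" by (auto simp: \<psi>C_def split: if_splits)
    then show False using False x(3) by blast
  qed
  show ?thesis by (subst E) simp
qed

lemma nbC_leaf: "card {x\<in>MV n 0. Leaf v j \<in> \<psi>C n x} \<le> 2"
proof -
  have "{x\<in>MV n 0. Leaf v j \<in> \<psi>C n x} \<subseteq> {(2,v)}"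
  proof
    fix x assume "x \<in> {x\<in>MV n 0. Leaf v j \<in> \<psi>C n x}"
    then have xm: "Leaf v j \<in> \<psi>C n x" "x \<in> MV n 0" by auto
    obtain t k where x0: "x = (t,k)" by (cases x)
    then have "t < 3" using xm by (simp add: MV_def)
    then show "x \<in> {(2,v)}" using xm x0 by (auto simp: \<psi>C_def split: if_splits)
  qed
  then have "card {x\<in>MV n 0. Leaf v j \<in> \<psi>C n x} \<le> card {(2::nat,v)}" by (intro card_mono) auto
  then show ?thesis by simp
qed

lemma \<psi>C_img:
  assumes n: "3 \<le> n"
  shows "\<psi>C n ` MV n 0 = clawed_edges (cycle_vertices n) (cycle_edges n)"
proof (intro set_eqI iffI)
  fix x assume "x \<in> \<psi>C n ` MV n 0"
  then obtain y where y: "y \<in> MV n 0" "x = \<psi>C n y" by blast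
  obtain t k where y0: "y = (t,k)" by (cases y)
  then have tk: "t < 3" "k < n" using y by (auto simp: MV_def)
  have ce: "{k, Suc k mod n} \<in> cycle_edges n" unfolding cycle_edges_def using tk by blast
  have e0: "{Orig k, Sub {k, Suc k mod n}} \<in> {{Orig u, Sub e} | u e. e \<in> cycle_edges n \<and> u \<in> e}"
    using ce by blast
  have e1: "{Orig (Suc k mod n), Sub {k, Suc k mod n}} \<in> {{Orig u, Sub e} | u e. e \<in> cycle_edges n \<and> u \<in> e}"
    using ce by blast
  have d: "deg (cycle_edges n) k = 2" using deg_cyc[OF n tk(2)] .
  have e2: "{Orig k, Leaf k 0} \<in> {{Orig v, Leaf v j} | v j. v \<in> cycle_vertices n \<and> j < 3 - deg (cycle_edges n) v}"
    using d tk unfolding cycle_vertices_def by (intro CollectI exI[of _ k] exI[of _ "0::nat"]) simp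
  show "x \<in> clawed_edges (cycle_vertices n) (cycle_edges n)"
    unfolding clawed_edges_def using e0 e1 e2 y(2) y0 by (auto simp: \<psi>C_def)
next
  fix x assume "x \<in> clawed_edges (cycle_vertices n) (cycle_edges n)"
  then consider (a) u e where "x = {Orig u, Sub e}" "e \<in> cycle_edges n" "u \<in> e"
    | (b) v j where "x = {Orig v, Leaf v j}" "v \<in> cycle_vertices n" "j < 3 - deg (cycle_edges n) v"
    unfolding clawed_edges_def by blast
  then show "x \<in> \<psi>C n ` MV n 0"
  proof cases
    case (a u e)
    obtain i where i: "i < n" "e = {i, Suc i mod n}" using a(2) unfolding cycle_edges_def by blast
    have "u = i \<or> u = Suc i mod n" using a(3) i by auto
    then show ?thesis
    proof
      assume "u = i"
      then have "x = \<psi>C n (0, i)" using a(1) i by (simp add: \<psi>C_def)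
      moreover have "(0, i) \<in> MV n 0" using i by (simp add: MV_def)
      ultimately show ?thesis by blast
    next
      assume "u = Suc i mod n"
      then have "x = \<psi>C n (1, i)" using a(1) i by (simp add: \<psi>C_def)
      moreover have "(1, i) \<in> MV n 0" using i by (simp add: MV_def)
      ultimately show ?thesis by blast
    qed
  next
    case (b v j)
    have v: "v < n" using b(2) by (simp add: cycle_vertices_def)
    then have "j = 0" using b(3) deg_cyc[OF n v] by simp
    then have "x = \<psi>C n (2, v)" using b(1) by (simp add: \<psi>C_def)
    moreover have "(2, v) \<in> MV n 0" using v by (simp add: MV_def)
    ultimately show ?thesis by blast
  qed
qed

lemma C_homeo:
  assumes n: "3 \<le> n"
  shows "top_of_set (geom_real (MK n 0)) homeomorphic_space
         top_of_set (geom_real (two_matchings (clawed_edges (cycle_vertices n) (cycle_edges n))))"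
proof (rule iso_homeomorphic[OF MV_finite])
  let ?E = "clawed_edges (cycle_vertices n) (cycle_edges n)"
  show "bij_betw (\<psi>C n) (MV n 0) ?E" using \<psi>C_inj[OF n] \<psi>C_img[OF n] by (simp add: bij_betw_def)
  show "MK n 0 \<subseteq> Pow (MV n 0)" by (auto simp: MK_def)
  show "two_matchings ?E \<subseteq> Pow ?E" by (auto simp: two_matchings_def)
  fix \<sigma> assume \<sigma>: "\<sigma> \<subseteq> MV n 0"
  let ?NF = "{Tk n k | k. k < n}"
  have "\<psi>C n ` \<sigma> \<in> two_matchings ?E \<longleftrightarrow> (\<forall>N\<in>?NF. \<not> N \<subseteq> \<sigma>)"
  proof (rule matching_iff[OF \<psi>C_inj[OF n] \<psi>C_img[OF n] MV_finite \<sigma>])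
    fix v :: "nat claw_vertex"
    show "card {x\<in>MV n 0. v \<in> \<psi>C n x} \<le> 2 \<or> {x\<in>MV n 0. v \<in> \<psi>C n x} \<in> ?NF"
    proof (cases v)
      case (Orig i)
      show ?thesis
      proof (cases "i < n")
        case True
        then show ?thesis using nbC_orig[OF n True] Orig by blast
      next
        case False
        then have E: "{x\<in>MV n 0. v \<in> \<psi>C n x} = {}" using nbC_big[of n i] Orig by simp
        show ?thesis by (rule disjI1, subst E, simp)
      qed
    next
      case (Sub e)
      then show ?thesis using nbC_sub[OF n, of e] by simp
    next
      case (Leaf a j)
      then show ?thesis using nbC_leaf[of n a j] by simp
    qed
  next
    fix N assume "N \<in> ?NF"
    then obtain k where "N = Tk n k" "k < n" by blast
    then show "card N = 3 \<and> (\<exists>v. {x\<in>MV n 0. v \<in> \<psi>C n x} = N)"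
      using nbC_orig[OF n, of k] Tk_card by blast
  qed
  moreover have "\<sigma> \<in> MK n 0 \<longleftrightarrow> (\<forall>N\<in>?NF. \<not> N \<subseteq> \<sigma>)" using \<sigma> by (auto simp: MK_def)
  ultimately show "\<sigma> \<in> MK n 0 \<longleftrightarrow> \<psi>C n ` \<sigma> \<in> two_matchings ?E" by simp
qed

theorem mainTheorem9:
  fixes n :: nat
  assumes "n \<ge> 3"
  shows "(top_of_set (geom_real (two_matchings
              (whiskered_edges (cycle_vertices (2 * n)) (cycle_edges (2 * n))))))
           homotopy_equivalent_space
         (top_of_set (geom_real (two_matchings
              (clawed_edges (cycle_vertices n) (cycle_edges n)))))"
proof -
  have n2: "2 \<le> n" using assms by simp
  have a: "top_of_set (geom_real (two_matchings (whiskered_edges (cycle_vertices (2 * n)) (cycle_edges (2 * n)))))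
      homotopy_equivalent_space top_of_set (geom_real (MK n n))"
    using W_homeo[OF n2] homeomorphic_space_sym homeomorphic_imp_homotopy_equivalent_space by blast
  have b: "top_of_set (geom_real (MK n n)) homotopy_equivalent_space top_of_set (geom_real (MK n 0))"
    using chain_equiv[OF n2] by simp
  have c: "top_of_set (geom_real (MK n 0)) homotopy_equivalent_space
      top_of_set (geom_real (two_matchings (clawed_edges (cycle_vertices n) (cycle_edges n))))"
    using C_homeo[OF assms] homeomorphic_imp_homotopy_equivalent_space by blast
  show ?thesis using homotopy_eqv_trans[OF homotopy_eqv_trans[OF a b] c] .
qed

end
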